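(* For every integer $n\ge 4$, $\chi_{ei}(C_5\square C_n)=5$.
   Context: All graphs are finite and simple. $C_k$ denotes the cycle on $k$ vertices. A path $P_4$ in $G$ is a sequence $uxyv$ of four distinct vertices with $ux,xy,yv\in E(G)$; $u,v$ are its end vertices. An $e$-injective $k$-coloring of $G$ is a function $f:V(G)\to\{1,\dots,k\}$ with $f(u)\ne f(v)$ whenever $u,v$ are the end vertices of some path $P_4$ in $G$; $\chi_{ei}(G)$ is the least such $k$. In the Cartesian product $G\square H$ two vertices are adjacent if they are adjacent in one coordinate and equal in the other. *)

theory Defs
  imports Main
begin

text \<open>A graph is given by a vertex set V and a symmetric irreflexive adjacency relation E.\<close>

definition cycle_verts :: "nat \<Rightarrow> nat set" where
  "cycle_verts k = {0..<k}"

definition cycle_adj :: "nat \<Rightarrow> nat \<Rightarrow> nat \<Rightarrow> bool" where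
  "cycle_adj k u v \<longleftrightarrow> u < k \<and> v < k \<and> u \<noteq> v \<and> ((u + 1) mod k = v \<or> (v + 1) mod k = u)"

definition box_adj :: "('a \<Rightarrow> 'a \<Rightarrow> bool) \<Rightarrow> ('b \<Rightarrow> 'b \<Rightarrow> bool) \<Rightarrow> 'a \<times> 'b \<Rightarrow> 'a \<times> 'b \<Rightarrow> bool" where
  "box_adj E1 E2 p q \<longleftrightarrow> (E1 (fst p) (fst q) \<and> snd p = snd q) \<or> (fst p = fst q \<and> E2 (snd p) (snd q))"

definition P4_ends :: "'a set \<Rightarrow> ('a \<Rightarrow> 'a \<Rightarrow> bool) \<Rightarrow> 'a \<Rightarrow> 'a \<Rightarrow> bool" where
  "P4_ends V E u v \<longleftrightarrow> (\<exists>x y. u \<in> V \<and> x \<in> V \<and> y \<in> V \<and> v \<in> V \<and> distinct [u, x, y, v]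
      \<and> E u x \<and> E x y \<and> E y v)"

definition e_injective_coloring :: "'a set \<Rightarrow> ('a \<Rightarrow> 'a \<Rightarrow> bool) \<Rightarrow> nat \<Rightarrow> ('a \<Rightarrow> nat) \<Rightarrow> bool" where
  "e_injective_coloring V E k f \<longleftrightarrow> f ` V \<subseteq> {1..k} \<and>
     (\<forall>u v. P4_ends V E u v \<longrightarrow> f u \<noteq> f v)"

definition chi_ei :: "'a set \<Rightarrow> ('a \<Rightarrow> 'a \<Rightarrow> bool) \<Rightarrow> nat" where
  "chi_ei V E = (LEAST k. \<exists>f. e_injective_coloring V E k f)"

end

theory Submission
  imports Defs
begin

definition gg :: "nat \<Rightarrow> nat \<Rightarrow> nat \<times> nat \<Rightarrow> int" where
  "gg n m p = int (fst p) + int (snd p) - 2 * int (min (snd p) m)"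

lemma sym14: "(x::int) mod 5 \<in> {1,4} \<Longrightarrow> (- x) mod 5 \<in> {1,4}"
proof -
  assume h: "x mod 5 \<in> {1,4}"
  have "(- x) mod 5 = (- (x mod 5)) mod 5" by (simp add: mod_minus_eq)
  then show ?thesis using h by auto
qed

lemma sum3: "(x::int) mod 5 \<in> {1,4} \<Longrightarrow> y mod 5 \<in> {1,4} \<Longrightarrow> z mod 5 \<in> {1,4}
   \<Longrightarrow> (x + y + z) mod 5 \<noteq> 0"
proof -
  assume h: "x mod 5 \<in> {1,4}" "y mod 5 \<in> {1,4}" "z mod 5 \<in> {1,4}"
  have "(x mod 5 + y mod 5 + z mod 5) mod 5 = ((x mod 5 + y mod 5) mod 5 + z mod 5) mod 5"
    by (rule mod_add_left_eq[symmetric])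
  also have "\<dots> = ((x + y) mod 5 + z mod 5) mod 5" by (simp only: mod_add_eq)
  also have "\<dots> = (x + y + z) mod 5" by (rule mod_add_eq)
  finally have e: "(x + y + z) mod 5 = (x mod 5 + y mod 5 + z mod 5) mod 5" by simp
  have "x mod 5 = 1 \<or> x mod 5 = 4" "y mod 5 = 1 \<or> y mod 5 = 4" "z mod 5 = 1 \<or> z mod 5 = 4"
    using h by auto
  then show ?thesis unfolding e by (elim disjE; simp)
qed

lemma lin_help: "(N::int) * 3 = 5 * D + M \<Longrightarrow> 2 * M - N = 5 * (N - 2 * D)"
  by (simp add: right_diff_distrib)

lemma step5: "a < 5 \<Longrightarrow> (a + 1) mod 5 = a' \<Longrightarrow> (int a' - int a) mod 5 \<in> {1,4}"
  by (cases "a = 4") auto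

lemma stepn: assumes "4 \<le> n" "m \<le> n - 1" "5 dvd (2 * int m - int n)" "b < n" "(b + 1) mod n = b'"
  shows "(gg n m (a, b') - gg n m (a, b)) mod 5 \<in> {1,4}"
proof (cases "b + 1 = n")
  case True
  then have "b' = 0" using assms by auto
  then have "gg n m (a, b') - gg n m (a, b) = 1 - int n + 2 * int m"
    using True assms by (simp add: gg_def)
  moreover obtain t where "2 * int m - int n = 5 * t" using assms(3) by (auto elim: dvdE)
  ultimately have "gg n m (a, b') - gg n m (a, b) = 1 + 5 * t" by linarith
  then show ?thesis by simp
next
  case False
  then have "b' = b + 1" using assms by auto
  then show ?thesis by (cases "b < m") (auto simp: gg_def)
qed

lemma adj_step:
  assumes "4 \<le> n" "m \<le> n - 1" "5 dvd (2 * int m - int n)"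
    and "box_adj (cycle_adj 5) (cycle_adj n) p q"
  shows "(gg n m q - gg n m p) mod 5 \<in> {1,4}"
proof -
  obtain a b a' b' where pq: "p = (a, b)" "q = (a', b')" by (cases p, cases q) auto
  show ?thesis
  proof (cases "cycle_adj 5 a a' \<and> b = b'")
    case True
    then have d: "gg n m q - gg n m p = int a' - int a" using pq by (simp add: gg_def)
    from True have "a < 5" "a' < 5" "(a + 1) mod 5 = a' \<or> (a' + 1) mod 5 = a"
      unfolding cycle_adj_def by auto
    then show ?thesis unfolding d
      using step5[of a a'] step5[of a' a] sym14[of "int a - int a'"] by auto
  next
    case False
    then have F: "a = a'" "cycle_adj n b b'" using assms(4) pq unfolding box_adj_def by auto
    then have "b < n" "b' < n" "(b + 1) mod n = b' \<or> (b' + 1) mod n = b"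
      unfolding cycle_adj_def by auto
    then show ?thesis using stepn[OF assms(1-3), of b b' a] stepn[OF assms(1-3), of b' b a]
        sym14[of "gg n m (a, b) - gg n m (a, b')"] pq F by auto
  qed
qed

lemma upper:
  assumes "4 \<le> n"
  shows "e_injective_coloring (cycle_verts 5 \<times> cycle_verts n) (box_adj (cycle_adj 5) (cycle_adj n)) 5
     (\<lambda>p. nat (gg n ((3 * n) mod 5) p mod 5) + 1)"
proof -
  define m where "m = (3 * n) mod 5"
  have "m < 5" unfolding m_def by simp
  have m1: "m \<le> n - 1"
  proof (cases "n = 4")
    case True then show ?thesis unfolding m_def by simp
  next
    case False then show ?thesis using assms \<open>m < 5\<close> by linarith
  qed
  have "int m = int n * 3 mod 5" unfolding m_def by (simp add: zmod_int mult.commute)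
  moreover have "int n * 3 = 5 * (int n * 3 div 5) + int n * 3 mod 5" by (simp only: mult_div_mod_eq)
  ultimately have "int n * 3 = 5 * (int n * 3 div 5) + int m" by linarith
  then have "2 * int m - int n = 5 * (int n - 2 * (int n * 3 div 5))"
    by (rule lin_help)
  then have m2: "5 dvd (2 * int m - int n)" by simp
  note st = adj_step[OF assms m1 m2]
  show ?thesis unfolding e_injective_coloring_def m_def[symmetric]
  proof (intro conjI allI impI)
    show "(\<lambda>p. nat (gg n m p mod 5) + 1) ` (cycle_verts 5 \<times> cycle_verts n) \<subseteq> {1..5}"
    proof
      fix c assume "c \<in> (\<lambda>p. nat (gg n m p mod 5) + 1) ` (cycle_verts 5 \<times> cycle_verts n)"
      then obtain p where c: "c = nat (gg n m p mod 5) + 1" by blast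
      have "gg n m p mod 5 < 5" "0 \<le> gg n m p mod 5" by simp_all
      then show "c \<in> {1..5}" unfolding c by simp
    qed
  next
    fix u v
    assume "P4_ends (cycle_verts 5 \<times> cycle_verts n) (box_adj (cycle_adj 5) (cycle_adj n)) u v"
    then obtain x y where e: "box_adj (cycle_adj 5) (cycle_adj n) u x"
      "box_adj (cycle_adj 5) (cycle_adj n) x y" "box_adj (cycle_adj 5) (cycle_adj n) y v"
      unfolding P4_ends_def by blast
    have "(gg n m v - gg n m u) mod 5 \<noteq> 0"
      using sum3[OF st[OF e(1)] st[OF e(2)] st[OF e(3)]] by simp
    then have "gg n m v mod 5 \<noteq> gg n m u mod 5" using mod_eq_dvd_iff[of "gg n m v" 5 "gg n m u"] dvd_eq_mod_eq_0 by blast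
    then show "nat (gg n m u mod 5) + 1 \<noteq> nat (gg n m v mod 5) + 1" by auto
  qed
qed

lemma P4_adj:
  assumes "4 \<le> n" "i < 5" "i' < 5" "cycle_adj 5 i i'"
  shows "P4_ends (cycle_verts 5 \<times> cycle_verts n) (box_adj (cycle_adj 5) (cycle_adj n)) (i, 0) (i', 0)"
proof -
  have c01: "cycle_adj n 0 1" "cycle_adj n 1 0" using assms(1) by (auto simp: cycle_adj_def)
  have "i \<noteq> i'" using assms(4) by (simp add: cycle_adj_def)
  then show ?thesis unfolding P4_ends_def
    apply (rule_tac x="(i,1)" in exI, rule_tac x="(i',1)" in exI)
    using assms c01 by (auto simp: cycle_verts_def box_adj_def)
qed

lemma P4_far:
  assumes "4 \<le> n" "i < 5" "i' = (i + 3) mod 5"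
  shows "P4_ends (cycle_verts 5 \<times> cycle_verts n) (box_adj (cycle_adj 5) (cycle_adj n)) (i, 0) (i', 0)"
proof -
  have "i = 0 \<or> i = 1 \<or> i = 2 \<or> i = 3 \<or> i = 4" using assms by auto
  then show ?thesis unfolding P4_ends_def
    apply (rule_tac x="((i+1) mod 5,0)" in exI, rule_tac x="((i+2) mod 5,0)" in exI)
    using assms by (elim disjE) (auto simp: cycle_verts_def box_adj_def cycle_adj_def)
qed

lemma lower:
  assumes "4 \<le> n"
    and "e_injective_coloring (cycle_verts 5 \<times> cycle_verts n) (box_adj (cycle_adj 5) (cycle_adj n)) k f"
  shows "5 \<le> k"
proof -
  let ?S = "(\<lambda>i. (i, 0::nat)) ` {0..<5::nat}"
  have sub: "?S \<subseteq> cycle_verts 5 \<times> cycle_verts n" using assms(1) by (auto simp: cycle_verts_def)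
  have ne: "f (i, 0) \<noteq> f (i', 0)" if "i < 5" "i' < 5" "i \<noteq> i'" for i i'
  proof -
    have "cycle_adj 5 i i' \<or> i' = (i + 3) mod 5 \<or> i = (i' + 3) mod 5"
    proof -
      have "i = 0 \<or> i = 1 \<or> i = 2 \<or> i = 3 \<or> i = 4" "i' = 0 \<or> i' = 1 \<or> i' = 2 \<or> i' = 3 \<or> i' = 4"
        using that by auto
      then show ?thesis using that unfolding cycle_adj_def by (elim disjE) simp_all
    qed
    then show ?thesis
      using P4_adj[OF assms(1) that(1,2)] P4_far[OF assms(1) that(1), of i'] P4_far[OF assms(1) that(2), of i]
        assms(2) unfolding e_injective_coloring_def by metis
  qed
  have inj: "inj_on f ?S" unfolding inj_on_def using ne by (auto, metis)
  have cs: "card ?S = 5" by (simp add: card_image inj_on_def)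
  have "f ` ?S \<subseteq> {1..k}" using assms(2) sub unfolding e_injective_coloring_def by auto
  then have "card (f ` ?S) \<le> card {1..k}" by (intro card_mono) auto
  then show ?thesis using card_image[OF inj] cs by simp
qed

theorem theorem4p8:
  fixes n :: nat
  assumes "n \<ge> 4"
  shows "chi_ei (cycle_verts 5 \<times> cycle_verts n) (box_adj (cycle_adj 5) (cycle_adj n)) = 5"
  unfolding chi_ei_def
  by (rule Least_equality) (use upper[OF assms] lower[OF assms] in blast)+

end
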